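(* Let $(X,d,\mu)$ be a metric median algebra and let $M\subseteq N$ be finite median subalgebras of $(X,\mu)$. Then $d^M_\mu(x,y)\le d^N_\mu(x,y)$ for all $x,y\in X$.
   Context: A median algebra is a set with a ternary operation $\mu$ such that $\mu(x,y,z)=\mu(x,z,y)=\mu(y,z,x)$, $\mu(x,x,y)=x$ and $\mu(\mu(x,y,z),u,v)=\mu(x,\mu(y,u,v),\mu(z,u,v))$. The median interval is $I(x,y)=\{z:\mu(x,y,z)=z\}$; a subset is convex if it contains $I(a,b)$ for all its elements $a,b$; a subalgebra is a subset closed under $\mu$. A wall of a median algebra $M$ is a partition $M=h\sqcup h^c$ into two non-empty convex subsets; it separates $a,b$ if they lie in different parts; $\mathcal{W}(M)$ is the set of walls and $\mathcal{W}^M(a|b)$ the set of walls separating $a,b$. For a finite median algebra $M$, an edge is a pair $\{x,y\}\subseteq M$ separated by exactly one wall of $M$. A metric median algebra $(X,d,\mu)$ is a median algebra with a metric $d$ for which $\mu$ is continuous. For a finite subalgebra $M\subseteq X$ and $W\in\mathcal{W}(M)$, let $\lambda^M_{\max}(W)=\max d(a,b)$ over edges $\{a,b\}$ of $M$ separated by $W$; for $x,y\in X$ set $d^M_\mu(x,y)=\sum_{W\in\mathcal{W}^M(x|y)}\lambda^M_{\max}(W)$ if $x,y\in M$, and $d^M_\mu(x,y)=0$ otherwise. *)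

theory Defs
  imports "HOL-Analysis.Analysis"
begin

definition median_algebra :: "('a \<Rightarrow> 'a \<Rightarrow> 'a \<Rightarrow> 'a) \<Rightarrow> bool" where
  "median_algebra \<mu> \<longleftrightarrow>
     (\<forall>x y z. \<mu> x y z = \<mu> x z y \<and> \<mu> x y z = \<mu> y z x) \<and>
     (\<forall>x y. \<mu> x x y = x) \<and>
     (\<forall>x y z u v. \<mu> (\<mu> x y z) u v = \<mu> x (\<mu> y u v) (\<mu> z u v))"

definition metric_median_algebra :: "('a::metric_space \<Rightarrow> 'a \<Rightarrow> 'a \<Rightarrow> 'a) \<Rightarrow> bool" where
  "metric_median_algebra \<mu> \<longleftrightarrow> median_algebra \<mu> \<and>
     continuous_on UNIV (\<lambda>(x, y, z). \<mu> x y z)"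

definition median_interval :: "('a \<Rightarrow> 'a \<Rightarrow> 'a \<Rightarrow> 'a) \<Rightarrow> 'a \<Rightarrow> 'a \<Rightarrow> 'a set" where
  "median_interval \<mu> x y = {z. \<mu> x y z = z}"

definition subalgebra :: "('a \<Rightarrow> 'a \<Rightarrow> 'a \<Rightarrow> 'a) \<Rightarrow> 'a set \<Rightarrow> bool" where
  "subalgebra \<mu> S \<longleftrightarrow> (\<forall>x\<in>S. \<forall>y\<in>S. \<forall>z\<in>S. \<mu> x y z \<in> S)"

text \<open>Convexity of a subset C of the median algebra M (with the restricted median):
  the interval of M between a and b is the median interval intersected with M.\<close>
definition convex_in :: "('a \<Rightarrow> 'a \<Rightarrow> 'a \<Rightarrow> 'a) \<Rightarrow> 'a set \<Rightarrow> 'a set \<Rightarrow> bool" where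
  "convex_in \<mu> M C \<longleftrightarrow> C \<subseteq> M \<and> (\<forall>a\<in>C. \<forall>b\<in>C. median_interval \<mu> a b \<inter> M \<subseteq> C)"

definition walls :: "('a \<Rightarrow> 'a \<Rightarrow> 'a \<Rightarrow> 'a) \<Rightarrow> 'a set \<Rightarrow> 'a set set set" where
  "walls \<mu> M = {{h, M - h} | h. h \<subseteq> M \<and> h \<noteq> {} \<and> M - h \<noteq> {} \<and>
                   convex_in \<mu> M h \<and> convex_in \<mu> M (M - h)}"

definition separates :: "'a set set \<Rightarrow> 'a \<Rightarrow> 'a \<Rightarrow> bool" where
  "separates W a b \<longleftrightarrow> (\<exists>h\<in>W. a \<in> h \<and> b \<notin> h)"

definition sep_walls :: "('a \<Rightarrow> 'a \<Rightarrow> 'a \<Rightarrow> 'a) \<Rightarrow> 'a set \<Rightarrow> 'a \<Rightarrow> 'a \<Rightarrow> 'a set set set" where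
  "sep_walls \<mu> M a b = {W \<in> walls \<mu> M. separates W a b}"

definition is_edge :: "('a \<Rightarrow> 'a \<Rightarrow> 'a \<Rightarrow> 'a) \<Rightarrow> 'a set \<Rightarrow> 'a \<Rightarrow> 'a \<Rightarrow> bool" where
  "is_edge \<mu> M a b \<longleftrightarrow> a \<in> M \<and> b \<in> M \<and> card (sep_walls \<mu> M a b) = 1"

definition lambda_max :: "('a::metric_space \<Rightarrow> 'a \<Rightarrow> 'a \<Rightarrow> 'a) \<Rightarrow> 'a set \<Rightarrow> 'a set set \<Rightarrow> real" where
  "lambda_max \<mu> M W = Max {dist a b | a b. is_edge \<mu> M a b \<and> separates W a b}"

definition d_mu :: "('a::metric_space \<Rightarrow> 'a \<Rightarrow> 'a \<Rightarrow> 'a) \<Rightarrow> 'a set \<Rightarrow> 'a \<Rightarrow> 'a \<Rightarrow> real" where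
  "d_mu \<mu> M x y = (if x \<in> M \<and> y \<in> M then (\<Sum>W\<in>sep_walls \<mu> M x y. lambda_max \<mu> M W) else 0)"

end

theory Submission
  imports Defs
begin

lemma ma_ax:
  assumes "median_algebra \<mu>"
  shows ma_s1: "\<mu> x y z = \<mu> x z y" and ma_s2: "\<mu> x y z = \<mu> y z x"
    and ma_s3: "\<mu> x y z = \<mu> y x z" and ma_m1: "\<mu> x x y = x"
    and ma_m2: "\<mu> x y x = x" and ma_m3: "\<mu> y x x = x"
    and ma_d: "\<mu> (\<mu> x y z) u v = \<mu> x (\<mu> y u v) (\<mu> z u v)"
  using assms unfolding median_algebra_def by metis+

lemmas ma_sym = ma_s1 ma_s2 ma_s3 ma_m1 ma_m2 ma_m3

lemma ma_I1:
  assumes "median_algebra \<mu>"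
  shows "\<mu> a b (\<mu> a b z) = \<mu> a b z"
proof -
  have "\<mu> (\<mu> z a b) a b = \<mu> z (\<mu> a a b) (\<mu> b a b)" by (rule ma_d[OF assms])
  then show ?thesis using ma_ax[OF assms] by metis
qed

lemma ma_F1:
  assumes "median_algebra \<mu>" "\<mu> a b c = c" "\<mu> a c z = z"
  shows "\<mu> a b z = z"
proof -
  have "\<mu> (\<mu> z a c) a b = \<mu> z (\<mu> a a b) (\<mu> c a b)" by (rule ma_d[OF assms(1)])
  then show ?thesis using ma_ax[OF assms(1)] assms(2,3) by metis
qed

lemma convexD:
  assumes "convex_in \<mu> M K" "p \<in> K" "q \<in> K" "z \<in> M" "\<mu> p q z = z"
  shows "z \<in> K"
  using assms unfolding convex_in_def median_interval_def by blast

lemma wall_parts: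
  assumes "W \<in> walls \<mu> M" "K \<in> W"
  shows "K \<subseteq> M" "convex_in \<mu> M K" "K \<noteq> {}" "M - K \<noteq> {}" "W = {K, M - K}"
    "convex_in \<mu> M (M - K)"
proof -
  obtain h where h: "W = {h, M - h}" "h \<subseteq> M" "h \<noteq> {}" "M - h \<noteq> {}"
    "convex_in \<mu> M h" "convex_in \<mu> M (M - h)"
    using assms(1) unfolding walls_def by blast
  have "K = h \<or> K = M - h" using assms(2) h(1) by blast
  moreover have "M - (M - h) = h" using h(2) by blast
  ultimately show "K \<subseteq> M" "convex_in \<mu> M K" "K \<noteq> {}" "M - K \<noteq> {}" "W = {K, M - K}"
    "convex_in \<mu> M (M - K)"
    using h by auto
qed

lemma walls_sub: "walls \<mu> M \<subseteq> Pow (Pow M)"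
  unfolding walls_def by blast

lemma finite_walls: "finite M \<Longrightarrow> finite (walls \<mu> M)"
  by (meson finite_Pow_iff finite_subset walls_sub)

lemma finite_sep: "finite M \<Longrightarrow> finite (sep_walls \<mu> M a b)"
  unfolding sep_walls_def by (rule finite_subset[OF _ finite_walls]) auto

lemma sep_iff:
  assumes "W \<in> walls \<mu> M" "a \<in> M" "b \<in> M"
  shows "separates W a b \<longleftrightarrow> \<not> (\<exists>K\<in>W. a \<in> K \<and> b \<in> K)"
proof
  assume "separates W a b"
  then obtain K where K: "K \<in> W" "a \<in> K" "b \<notin> K" unfolding separates_def by blast
  have "W = {K, M - K}" using wall_parts[OF assms(1) K(1)] by simp
  then show "\<not> (\<exists>K\<in>W. a \<in> K \<and> b \<in> K)" using K by auto
next
  assume n: "\<not> (\<exists>K\<in>W. a \<in> K \<and> b \<in> K)"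
  obtain K where K: "K \<in> W" using assms(1) unfolding walls_def by blast
  have "W = {K, M - K}" using wall_parts[OF assms(1) K] by simp
  then show "separates W a b" using n assms unfolding separates_def by auto
qed

lemma sep_sym:
  assumes "W \<in> walls \<mu> M" "a \<in> M" "b \<in> M"
  shows "separates W a b \<longleftrightarrow> separates W b a"
  using sep_iff[OF assms] sep_iff[OF assms(1,3,2)] by blast

lemma sep_sub:
  assumes ma: "median_algebra \<mu>" and W: "W \<in> walls \<mu> M" and M: "a \<in> M" "b \<in> M" "c \<in> M"
    and c: "\<mu> a b c = c" and s: "separates W a c"
  shows "separates W a b"
proof (rule ccontr)
  assume "\<not> separates W a b"
  then obtain K where K: "K \<in> W" "a \<in> K" "b \<in> K" using sep_iff[OF W M(1,2)] by blast
  have "c \<in> K" using convexD[OF wall_parts(2)[OF W K(1)] K(2,3) M(3) c] .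
  then show False using s sep_iff[OF W M(1,3)] K by blast
qed

lemma sep_disj:
  assumes ma: "median_algebra \<mu>" and W: "W \<in> walls \<mu> M" and M: "a \<in> M" "b \<in> M" "c \<in> M"
    and c: "\<mu> a b c = c" and s1: "separates W a c" and s2: "separates W c b"
  shows False
proof -
  obtain K where K: "K \<in> W" "a \<in> K" "c \<notin> K" using s1 unfolding separates_def by blast
  have WK: "W = {K, M - K}" using wall_parts[OF W K(1)] by simp
  have "b \<in> K" using s2 K WK M unfolding separates_def by auto
  then show False using convexD[OF wall_parts(2)[OF W K(1)] K(2) _ M(3) c] K by blast
qed

lemma edge_sep:
  assumes ma: "median_algebra \<mu>" and sub: "subalgebra \<mu> M" and ab: "a \<in> M" "b \<in> M" "a \<noteq> b"
    and int: "median_interval \<mu> a b \<inter> M \<subseteq> {a, b}"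
  shows "sep_walls \<mu> M a b = {{{z\<in>M. \<mu> a b z = a}, M - {z\<in>M. \<mu> a b z = a}}}"
proof -
  define H where "H = {z\<in>M. \<mu> a b z = a}"
  have proj: "\<mu> a b z = a \<or> \<mu> a b z = b" if "z \<in> M" for z
  proof -
    have "\<mu> a b z \<in> M" using sub ab that unfolding subalgebra_def by blast
    moreover have "\<mu> a b z \<in> median_interval \<mu> a b"
      unfolding median_interval_def using ma_I1[OF ma] by simp
    ultimately show ?thesis using int by blast
  qed
  have compl: "M - H = {z\<in>M. \<mu> a b z = b}" unfolding H_def using proj ab by auto
  have cH: "convex_in \<mu> M H"
    unfolding convex_in_def median_interval_def
  proof (intro conjI ballI subsetI)
    fix z assume "z \<in> H" then show "z \<in> M" unfolding H_def by blast
  next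
    fix p q z assume p: "p \<in> H" and q: "q \<in> H" and z: "z \<in> {z. \<mu> p q z = z} \<inter> M"
    have e: "\<mu> (\<mu> p q z) a b = \<mu> p (\<mu> q a b) (\<mu> z a b)" by (rule ma_d[OF ma])
    have "\<mu> a b q = a" "\<mu> a b p = a" using p q unfolding H_def by auto
    then have "\<mu> q a b = a" "\<mu> p a b = a" using ma_s2[OF ma, of q a b] ma_s2[OF ma, of p a b] by simp_all
    have zz: "\<mu> p q z = z" using z by simp
    have "\<mu> z a b = \<mu> p a (\<mu> z a b)" using e zz \<open>\<mu> q a b = a\<close> by simp
    then have "\<mu> a b z = \<mu> p a (\<mu> a b z)" using ma_s2[OF ma, of z a b] by metis
    then have "\<mu> a b z = a"
      using proj[of z] z \<open>\<mu> p a b = a\<close> by auto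
    then show "z \<in> H" using z unfolding H_def by blast
  qed
  have cH': "convex_in \<mu> M (M - H)"
    unfolding convex_in_def median_interval_def compl
  proof (intro conjI ballI subsetI)
    fix z assume "z \<in> {z \<in> M. \<mu> a b z = b}" then show "z \<in> M" by blast
  next
    fix p q z assume p: "p \<in> {z \<in> M. \<mu> a b z = b}" and q: "q \<in> {z \<in> M. \<mu> a b z = b}"
      and z: "z \<in> {z. \<mu> p q z = z} \<inter> M"
    have e: "\<mu> (\<mu> p q z) a b = \<mu> p (\<mu> q a b) (\<mu> z a b)" by (rule ma_d[OF ma])
    have "\<mu> a b q = b" "\<mu> a b p = b" using p q by auto
    then have "\<mu> q a b = b" "\<mu> p a b = b" using ma_s2[OF ma, of q a b] ma_s2[OF ma, of p a b] by simp_all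
    have zz: "\<mu> p q z = z" using z by simp
    have "\<mu> z a b = \<mu> p b (\<mu> z a b)" using e zz \<open>\<mu> q a b = b\<close> by simp
    then have "\<mu> a b z = \<mu> p b (\<mu> a b z)" using ma_s2[OF ma, of z a b] by metis
    then have "\<mu> a b z = b"
      using proj[of z] z \<open>\<mu> p a b = b\<close> ma_s1[OF ma, of p b a] by auto
    then show "z \<in> {z \<in> M. \<mu> a b z = b}" using z by blast
  qed
  have aH: "a \<in> H" unfolding H_def using ab ma_m2[OF ma, of a b] by simp
  have bH: "b \<in> M - H" using compl ab(2) ma_m3[OF ma, of a b] by simp
  have W0: "{H, M - H} \<in> walls \<mu> M"
  proof -
    have "H \<subseteq> M" unfolding H_def by blast
    then show ?thesis unfolding walls_def using cH cH' aH bH by blast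
  qed
  have s0: "separates {H, M - H} a b" unfolding separates_def using aH bH by blast
  have "W = {H, M - H}" if W: "W \<in> sep_walls \<mu> M a b" for W
  proof -
    have Ww: "W \<in> walls \<mu> M" and sW: "separates W a b" using W unfolding sep_walls_def by auto
    obtain K where K: "K \<in> W" "a \<in> K" "b \<notin> K" using sW unfolding separates_def by blast
    note wp = wall_parts[OF Ww K(1)]
    have "K = H"
    proof
      show "K \<subseteq> H"
      proof
        fix z assume z: "z \<in> K"
        have zM: "z \<in> M" using z wp(1) by blast
        show "z \<in> H"
        proof (rule ccontr)
          assume "z \<notin> H"
          then have "\<mu> a b z = b" using compl zM by blast
          then have "\<mu> a z b = b" using ma_s1[OF ma, of a z b] by simp
          then have "b \<in> K" using convexD[OF wp(2) K(2) z ab(2)] by simp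
          then show False using K by blast
        qed
      qed
      show "H \<subseteq> K"
      proof
        fix z assume z: "z \<in> H"
        show "z \<in> K"
        proof (rule ccontr)
          assume "z \<notin> K"
          then have z': "z \<in> M - K" using z unfolding H_def by blast
          have "\<mu> b z a = a" using z ma_s2[OF ma, of a b z] unfolding H_def by auto
          then have "a \<in> M - K" using convexD[OF wp(6) _ z' ab(1)] K ab by blast
          then show False using K by blast
        qed
      qed
    qed
    then show ?thesis using wp(5) by simp
  qed
  then have "sep_walls \<mu> M a b = {{H, M - H}}"
    using W0 s0 unfolding sep_walls_def by blast
  then show ?thesis unfolding H_def .
qed

lemma edge_of_interval:
  assumes ma: "median_algebra \<mu>" and sub: "subalgebra \<mu> M" and ab: "a \<in> M" "b \<in> M" "a \<noteq> b"
    and int: "median_interval \<mu> a b \<inter> M \<subseteq> {a, b}"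
  shows "is_edge \<mu> M a b"
  unfolding is_edge_def using edge_sep[OF assms] ab by simp

lemma interval_finite: "finite M \<Longrightarrow> finite (median_interval \<mu> a b \<inter> M)" by simp

lemma edge_exists:
  assumes ma: "median_algebra \<mu>" and sub: "subalgebra \<mu> M" and fin: "finite M"
    and W: "W \<in> walls \<mu> M"
  shows "\<exists>a b. is_edge \<mu> M a b \<and> separates W a b"
proof -
  obtain h where h: "h \<in> W" using W unfolding walls_def by blast
  note wp = wall_parts[OF W h]
  define P where "P = (\<lambda>p. fst p \<in> h \<and> snd p \<in> M - h)"
  define m where "m = (\<lambda>p. card (median_interval \<mu> (fst p) (snd p) \<inter> M))"
  obtain a0 b0 where "a0 \<in> h" "b0 \<in> M - h" using wp by blast
  then have "P (a0, b0)" unfolding P_def by simp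
  from ex_has_least_nat[of P, OF this, of m] obtain p where p: "P p" "\<forall>y. P y \<longrightarrow> m p \<le> m y"
    by blast
  obtain a b where pab: "p = (a, b)" by (cases p)
  have a: "a \<in> h" and b: "b \<in> M - h" using p(1) pab unfolding P_def by auto
  have aM: "a \<in> M" using a wp(1) by blast
  have bM: "b \<in> M" using b by blast
  have ab: "a \<noteq> b" using a b by blast
  have int: "median_interval \<mu> a b \<inter> M \<subseteq> {a, b}"
  proof
    fix c assume c: "c \<in> median_interval \<mu> a b \<inter> M"
    show "c \<in> {a, b}"
    proof (rule ccontr)
      assume nc: "c \<notin> {a, b}"
      have cab: "\<mu> a b c = c" "c \<in> M" using c unfolding median_interval_def by auto
      show False
      proof (cases "c \<in> h")
        case True
        have sub1: "median_interval \<mu> c b \<inter> M \<subseteq> median_interval \<mu> a b \<inter> M"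
        proof
          fix z assume "z \<in> median_interval \<mu> c b \<inter> M"
          then have z: "\<mu> c b z = z" "z \<in> M" unfolding median_interval_def by auto
          have "\<mu> b a c = c" using cab(1) ma_s3[OF ma, of a b c] by simp
          moreover have "\<mu> b c z = z" using z ma_s3[OF ma, of c b z] by simp
          ultimately have "\<mu> b a z = z" by (rule ma_F1[OF ma])
          then show "z \<in> median_interval \<mu> a b \<inter> M"
            unfolding median_interval_def using z ma_s3[OF ma, of b a z] by auto
        qed
        have "a \<notin> median_interval \<mu> c b"
        proof
          assume "a \<in> median_interval \<mu> c b"
          then have "\<mu> c b a = a" unfolding median_interval_def by simp
          then show False using cab nc ma_s1[OF ma, of c b a] ma_s2[OF ma, of c a b] by simp
        qed
        then have "median_interval \<mu> c b \<inter> M \<subset> median_interval \<mu> a b \<inter> M"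
          using sub1 aM \<open>a \<notin> median_interval \<mu> c b\<close> ma_m2[OF ma, of a b] unfolding median_interval_def by auto
        then have "m (c, b) < m p" unfolding m_def pab by (simp add: psubset_card_mono fin)
        moreover have "P (c, b)" unfolding P_def using True b by simp
        ultimately show False using p(2) by force
      next
        case False
        have sub1: "median_interval \<mu> a c \<inter> M \<subseteq> median_interval \<mu> a b \<inter> M"
        proof
          fix z assume "z \<in> median_interval \<mu> a c \<inter> M"
          then have z: "\<mu> a c z = z" "z \<in> M" unfolding median_interval_def by auto
          have "\<mu> a b z = z" by (rule ma_F1[OF ma cab(1) z(1)])
          then show "z \<in> median_interval \<mu> a b \<inter> M"
            unfolding median_interval_def using z by auto
        qed
        have "b \<notin> median_interval \<mu> a c"
        proof
          assume "b \<in> median_interval \<mu> a c"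
          then have "\<mu> a c b = b" unfolding median_interval_def by simp
          then show False using cab nc ma_s1[OF ma, of a c b] by simp
        qed
        then have "median_interval \<mu> a c \<inter> M \<subset> median_interval \<mu> a b \<inter> M"
          using sub1 bM \<open>b \<notin> median_interval \<mu> a c\<close> ma_m3[OF ma, of a b] unfolding median_interval_def by auto
        then have "m (a, c) < m p" unfolding m_def pab by (simp add: psubset_card_mono fin)
        moreover have "P (a, c)" unfolding P_def using False a cab by simp
        ultimately show False using p(2) by force
      qed
    qed
  qed
  have "is_edge \<mu> M a b" by (rule edge_of_interval[OF ma sub aM bM ab int])
  moreover have "separates W a b" unfolding separates_def using h a b by blast
  ultimately show ?thesis by blast
qed

lemma edge_set_finite:
  assumes "finite M"
  shows "finite {dist a b | a b. is_edge \<mu> M a b \<and> separates W a b}"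
proof -
  have "{dist a b | a b. is_edge \<mu> M a b \<and> separates W a b} \<subseteq> (\<lambda>(a,b). dist a b) ` (M \<times> M)"
    unfolding is_edge_def by auto
  then show ?thesis using assms finite_subset by blast
qed

lemma lam_ge:
  assumes "finite M" "is_edge \<mu> M a b" "separates W a b"
  shows "dist a b \<le> lambda_max \<mu> M W"
  unfolding lambda_max_def using assms edge_set_finite[OF assms(1)]
  by (intro Max_ge) blast+

lemma lam_nonneg:
  assumes ma: "median_algebra \<mu>" and sub: "subalgebra \<mu> M" and fin: "finite M"
    and W: "W \<in> walls \<mu> M"
  shows "0 \<le> lambda_max \<mu> M W"
proof -
  obtain a b where "is_edge \<mu> M a b" "separates W a b" using edge_exists[OF assms] by blast
  then have "dist a b \<le> lambda_max \<mu> M W" using lam_ge[OF fin] by blast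
  then show ?thesis using zero_le_dist order_trans by blast
qed

lemma path_bound:
  assumes ma: "median_algebra \<mu>" and sub: "subalgebra \<mu> N" and fin: "finite N"
  shows "a \<in> N \<Longrightarrow> b \<in> N \<Longrightarrow>
    dist a b \<le> (\<Sum>V\<in>sep_walls \<mu> N a b. lambda_max \<mu> N V)"
proof (induction "card (median_interval \<mu> a b \<inter> N)" arbitrary: a b rule: less_induct)
  case less
  have nn: "\<And>a b. 0 \<le> (\<Sum>V\<in>sep_walls \<mu> N a b. lambda_max \<mu> N V)"
    by (rule sum_nonneg) (auto simp: sep_walls_def intro: lam_nonneg[OF ma sub fin])
  show ?case
  proof (cases "a = b")
    case True
    then show ?thesis using nn by simp
  next
    case ab: False
    show ?thesis
    proof (cases "median_interval \<mu> a b \<inter> N \<subseteq> {a, b}")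
      case True
      note es = edge_sep[OF ma sub less.prems ab True]
      define V0 where "V0 = {{z\<in>N. \<mu> a b z = a}, N - {z\<in>N. \<mu> a b z = a}}"
      have e: "is_edge \<mu> N a b" by (rule edge_of_interval[OF ma sub less.prems ab True])
      have "V0 \<in> sep_walls \<mu> N a b" using es V0_def by simp
      then have "separates V0 a b" unfolding sep_walls_def by simp
      then have "dist a b \<le> lambda_max \<mu> N V0" using lam_ge[OF fin e] by blast
      then show ?thesis using es V0_def by simp
    next
      case False
      then obtain c where c: "c \<in> median_interval \<mu> a b \<inter> N" "c \<noteq> a" "c \<noteq> b" by blast
      have cab: "\<mu> a b c = c" and cN: "c \<in> N" using c unfolding median_interval_def by auto
      have sub1: "median_interval \<mu> c b \<inter> N \<subseteq> median_interval \<mu> a b \<inter> N"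
      proof
        fix z assume "z \<in> median_interval \<mu> c b \<inter> N"
        then have z: "\<mu> c b z = z" "z \<in> N" unfolding median_interval_def by auto
        have "\<mu> b a c = c" using cab ma_s3[OF ma, of a b c] by simp
        moreover have "\<mu> b c z = z" using z ma_s3[OF ma, of c b z] by simp
        ultimately have "\<mu> b a z = z" by (rule ma_F1[OF ma])
        then show "z \<in> median_interval \<mu> a b \<inter> N"
          unfolding median_interval_def using z ma_s3[OF ma, of b a z] by auto
      qed
      have "a \<notin> median_interval \<mu> c b"
      proof
        assume "a \<in> median_interval \<mu> c b"
        then have "\<mu> c b a = a" unfolding median_interval_def by simp
        then show False using cab c ma_s1[OF ma, of c b a] ma_s2[OF ma, of c a b] by simp
      qed
      then have "median_interval \<mu> c b \<inter> N \<subset> median_interval \<mu> a b \<inter> N"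
        using sub1 less.prems ma_m2[OF ma, of a b] unfolding median_interval_def by auto
      then have lt1: "card (median_interval \<mu> c b \<inter> N) < card (median_interval \<mu> a b \<inter> N)"
        by (simp add: psubset_card_mono fin)
      have sub2: "median_interval \<mu> a c \<inter> N \<subseteq> median_interval \<mu> a b \<inter> N"
      proof
        fix z assume "z \<in> median_interval \<mu> a c \<inter> N"
        then have z: "\<mu> a c z = z" "z \<in> N" unfolding median_interval_def by auto
        have "\<mu> a b z = z" by (rule ma_F1[OF ma cab z(1)])
        then show "z \<in> median_interval \<mu> a b \<inter> N"
          unfolding median_interval_def using z by auto
      qed
      have "b \<notin> median_interval \<mu> a c"
      proof
        assume "b \<in> median_interval \<mu> a c"
        then have "\<mu> a c b = b" unfolding median_interval_def by simp
        then show False using cab c ma_s1[OF ma, of a c b] by simp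
      qed
      then have "median_interval \<mu> a c \<inter> N \<subset> median_interval \<mu> a b \<inter> N"
        using sub2 less.prems ma_m3[OF ma, of a b] unfolding median_interval_def by auto
      then have lt2: "card (median_interval \<mu> a c \<inter> N) < card (median_interval \<mu> a b \<inter> N)"
        by (simp add: psubset_card_mono fin)
      have IH1: "dist a c \<le> (\<Sum>V\<in>sep_walls \<mu> N a c. lambda_max \<mu> N V)"
        using less.hyps[OF lt2 less.prems(1) cN] .
      have IH2: "dist c b \<le> (\<Sum>V\<in>sep_walls \<mu> N c b. lambda_max \<mu> N V)"
        using less.hyps[OF lt1 cN less.prems(2)] .
      have s1: "sep_walls \<mu> N a c \<subseteq> sep_walls \<mu> N a b"
        unfolding sep_walls_def using sep_sub[OF ma _ less.prems cN cab] by blast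
      have cba: "\<mu> b a c = c" using cab ma_s3[OF ma, of a b c] by simp
      have s2: "sep_walls \<mu> N c b \<subseteq> sep_walls \<mu> N a b"
      proof
        fix W assume "W \<in> sep_walls \<mu> N c b"
        then have W: "W \<in> walls \<mu> N" "separates W c b" unfolding sep_walls_def by auto
        then have "separates W b c" using sep_sym[OF W(1) cN less.prems(2)] by simp
        then have "separates W b a" by (rule sep_sub[OF ma W(1) less.prems(2,1) cN cba])
        then have "separates W a b" using sep_sym[OF W(1) less.prems] by simp
        then show "W \<in> sep_walls \<mu> N a b" using W unfolding sep_walls_def by simp
      qed
      have dj: "sep_walls \<mu> N a c \<inter> sep_walls \<mu> N c b = {}"
        unfolding sep_walls_def using sep_disj[OF ma _ less.prems cN cab] by blast
      have "dist a b \<le> dist a c + dist c b" by (rule dist_triangle)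
      also have "\<dots> \<le> (\<Sum>V\<in>sep_walls \<mu> N a c. lambda_max \<mu> N V) + (\<Sum>V\<in>sep_walls \<mu> N c b. lambda_max \<mu> N V)"
        using IH1 IH2 by simp
      also have "\<dots> = (\<Sum>V\<in>sep_walls \<mu> N a c \<union> sep_walls \<mu> N c b. lambda_max \<mu> N V)"
        by (rule sum.union_disjoint[symmetric]) (use finite_sep[OF fin] dj in auto)
      also have "\<dots> \<le> (\<Sum>V\<in>sep_walls \<mu> N a b. lambda_max \<mu> N V)"
        by (rule sum_mono2) (use finite_sep[OF fin] s1 s2 in \<open>auto simp: sep_walls_def intro: lam_nonneg[OF ma sub fin]\<close>)
      finally show ?thesis .
    qed
  qed
qed

lemma restrict_sep:
  assumes MN: "M \<subseteq> N" and V: "V \<in> walls \<mu> N" and ab: "a \<in> M" "b \<in> M"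
    and s: "separates V a b"
  shows "(\<lambda>k. k \<inter> M) ` V \<in> walls \<mu> M \<and> separates ((\<lambda>k. k \<inter> M) ` V) a b"
proof -
  obtain K where K: "K \<in> V" "a \<in> K" "b \<notin> K" using s unfolding separates_def by blast
  note wp = wall_parts[OF V K(1)]
  have e2: "(N - K) \<inter> M = M - K \<inter> M" using MN by blast
  have img: "(\<lambda>k. k \<inter> M) ` V = {K \<inter> M, M - K \<inter> M}" using wp(5) e2 by simp
  have c1: "convex_in \<mu> M (K \<inter> M)" unfolding convex_in_def
  proof (intro conjI ballI subsetI)
    fix z assume "z \<in> K \<inter> M" then show "z \<in> M" by blast
  next
    fix p q z assume p: "p \<in> K \<inter> M" and q: "q \<in> K \<inter> M"
      and z: "z \<in> median_interval \<mu> p q \<inter> M"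
    have "p \<in> K" "q \<in> K" "z \<in> N" "\<mu> p q z = z" using p q z MN unfolding median_interval_def by auto
    then have "z \<in> K" using convexD[OF wp(2)] by blast
    then show "z \<in> K \<inter> M" using z by blast
  qed
  have c2: "convex_in \<mu> M (M - K \<inter> M)" unfolding convex_in_def
  proof (intro conjI ballI subsetI)
    fix z assume "z \<in> M - K \<inter> M" then show "z \<in> M" by blast
  next
    fix p q z assume p: "p \<in> M - K \<inter> M" and q: "q \<in> M - K \<inter> M"
      and z: "z \<in> median_interval \<mu> p q \<inter> M"
    have "p \<in> N - K" "q \<in> N - K" "z \<in> N" "\<mu> p q z = z" using p q z MN unfolding median_interval_def by auto
    then have "z \<in> N - K" using convexD[OF wp(6)] by blast
    then show "z \<in> M - K \<inter> M" using z by blast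
  qed
  have h1: "K \<inter> M \<subseteq> M" "K \<inter> M \<noteq> {}" "M - K \<inter> M \<noteq> {}" using K ab by auto
  have w: "{K \<inter> M, M - K \<inter> M} \<in> walls \<mu> M"
    unfolding walls_def by (rule CollectI, rule exI[of _ "K \<inter> M"], intro conjI refl c1 c2 h1)
  have "separates {K \<inter> M, M - K \<inter> M} a b" unfolding separates_def
    by (rule bexI[of _ "K \<inter> M"]) (use K ab in auto)
  then show ?thesis unfolding img using w by (intro conjI)
qed

lemma restrict_back:
  assumes "separates ((\<lambda>k. k \<inter> M) ` V) x y" "y \<in> M"
  shows "separates V x y"
proof -
  obtain h where h: "h \<in> (\<lambda>k. k \<inter> M) ` V" "x \<in> h" "y \<notin> h" using assms(1) unfolding separates_def by blast
  then obtain k where "k \<in> V" "h = k \<inter> M" by blast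
  then show ?thesis using h assms(2) unfolding separates_def by blast
qed

theorem lemma3p4:
  fixes \<mu> :: "'a::metric_space \<Rightarrow> 'a \<Rightarrow> 'a \<Rightarrow> 'a" and M N :: "'a set" and x y :: 'a
  assumes "metric_median_algebra \<mu>"
    and "finite M" and "finite N" and "M \<subseteq> N"
    and "subalgebra \<mu> M" and "subalgebra \<mu> N"
  shows "d_mu \<mu> M x y \<le> d_mu \<mu> N x y"
proof -
  have ma: "median_algebra \<mu>" using assms(1) unfolding metric_median_algebra_def by simp
  note finM = assms(2) and finN = assms(3) and MN = assms(4) and subM = assms(5) and subN = assms(6)
  have nnN: "0 \<le> (\<Sum>V\<in>sep_walls \<mu> N a b. lambda_max \<mu> N V)" for a b
    by (rule sum_nonneg) (auto simp: sep_walls_def intro: lam_nonneg[OF ma subN finN])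
  show ?thesis
  proof (cases "x \<in> M \<and> y \<in> M")
    case False
    then show ?thesis unfolding d_mu_def using nnN by auto
  next
    case True
    then have xy: "x \<in> M" "y \<in> M" "x \<in> N" "y \<in> N" using MN by auto
    define r where "r = (\<lambda>V::'a set set. (\<lambda>k. k \<inter> M) ` V)"
    define SN where "SN = sep_walls \<mu> N x y"
    define SM where "SM = sep_walls \<mu> M x y"
    have rSN: "r ` SN \<subseteq> SM"
    proof
      fix W assume "W \<in> r ` SN"
      then obtain V where V: "V \<in> SN" "W = r V" by blast
      then have "V \<in> walls \<mu> N" "separates V x y" unfolding SN_def sep_walls_def by auto
      then show "W \<in> SM" using restrict_sep[OF MN _ xy(1,2)] V(2) unfolding SM_def sep_walls_def r_def
        by blast
    qed
    have step: "lambda_max \<mu> M W \<le> (\<Sum>V\<in>{V\<in>SN. r V = W}. lambda_max \<mu> N V)" if W: "W \<in> SM" for W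
    proof -
      have Ww: "W \<in> walls \<mu> M" and Wxy: "separates W x y" using W unfolding SM_def sep_walls_def by auto
      define E where "E = {dist a b | a b. is_edge \<mu> M a b \<and> separates W a b}"
      have Ef: "finite E" unfolding E_def by (rule edge_set_finite[OF finM])
      have Ene: "E \<noteq> {}" using edge_exists[OF ma subM finM Ww] unfolding E_def by blast
      have "lambda_max \<mu> M W \<in> E" unfolding lambda_max_def E_def[symmetric] using Ef Ene by simp
      then obtain a b where ab: "lambda_max \<mu> M W = dist a b" "is_edge \<mu> M a b" "separates W a b"
        unfolding E_def by blast
      have aM: "a \<in> M" and bM: "b \<in> M" and c1: "card (sep_walls \<mu> M a b) = 1"
        using ab(2) unfolding is_edge_def by auto
      have "W \<in> sep_walls \<mu> M a b" using Ww ab(3) unfolding sep_walls_def by simp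
      then have sMab: "sep_walls \<mu> M a b = {W}" using c1 by (metis card_1_singletonE singletonD)
      have "dist a b \<le> (\<Sum>V\<in>sep_walls \<mu> N a b. lambda_max \<mu> N V)"
        using path_bound[OF ma subN finN] aM bM MN by blast
      also have "\<dots> \<le> (\<Sum>V\<in>{V\<in>SN. r V = W}. lambda_max \<mu> N V)"
      proof (rule sum_mono2)
        show "finite {V\<in>SN. r V = W}" unfolding SN_def using finite_sep[OF finN] by simp
        show "sep_walls \<mu> N a b \<subseteq> {V\<in>SN. r V = W}"
        proof
          fix V assume "V \<in> sep_walls \<mu> N a b"
          then have V: "V \<in> walls \<mu> N" "separates V a b" unfolding sep_walls_def by auto
          have "r V \<in> sep_walls \<mu> M a b"
            using restrict_sep[OF MN V(1) aM bM V(2)] unfolding sep_walls_def r_def by simp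
          then have rV: "r V = W" using sMab by simp
          have "separates V x y" using restrict_back[of M V x y] Wxy rV xy(2) unfolding r_def by simp
          then show "V \<in> {V\<in>SN. r V = W}" using V rV unfolding SN_def sep_walls_def by simp
        qed
        show "0 \<le> lambda_max \<mu> N V" if "V \<in> {V\<in>SN. r V = W} - sep_walls \<mu> N a b" for V
          using that unfolding SN_def sep_walls_def by (auto intro: lam_nonneg[OF ma subN finN])
      qed
      finally show ?thesis using ab(1) by simp
    qed
    have "d_mu \<mu> M x y = (\<Sum>W\<in>SM. lambda_max \<mu> M W)" unfolding d_mu_def SM_def using xy by simp
    also have "\<dots> \<le> (\<Sum>W\<in>SM. \<Sum>V\<in>{V\<in>SN. r V = W}. lambda_max \<mu> N V)"
      by (rule sum_mono) (rule step)
    also have "\<dots> = (\<Sum>V\<in>SN. lambda_max \<mu> N V)"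
      by (rule sum.group) (use finite_sep[OF finN] finite_sep[OF finM] rSN in \<open>auto simp: SN_def SM_def\<close>)
    also have "\<dots> = d_mu \<mu> N x y" unfolding d_mu_def SN_def using xy by simp
    finally show ?thesis .
  qed
qed

end
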